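(* Fix $n\ge 2$, a dictator agent $t\in\{1,\dots,n\}$, and parameters $k\in[2,+\infty)$ and $a\in(0,1)$. Let $f$ be the mechanism that, on a profile $\mathbf{x}=(x_1,\dots,x_n)$ with $x_l=\min\mathbf{x}$, $x_r=\max\mathbf{x}$, $L=x_r-x_l$, outputs $l_1=x_t$ and $$l_2=\begin{cases} x_t+\max\left\{\frac{(1-a)k}{a}(x_t-x_l),\; x_r-x_t\right\} & \text{if } x_t\in[x_l,\,x_l+aL),\\[2pt] x_t-\max\left\{x_t-x_l,\; \frac{ak}{1-a}(x_r-x_t)\right\} & \text{if } x_t\in[x_l+aL,\,x_r].\end{cases}$$ Then for every profile $\mathbf{x}\in\mathbb{R}^n$, $SC(f,\mathbf{x})\le \max\left\{\frac{(1-a)k}{2a},\frac{ak}{2(1-a)}\right\}(n-1)\,OPT(\mathbf{x})$.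
   Context: Two-facility game on a line: agent $i$ has location $x_i\in\mathbb{R}$. For facility locations $\{l_1,l_2\}$, an agent at $y$ has cost $\min\{|l_1-y|,|l_2-y|\}$. $SC(f,\mathbf{x})$ is the sum over all agents of their costs under $f(\mathbf{x})$, and $OPT(\mathbf{x})=\min_{l_1,l_2\in\mathbb{R}}\sum_i\min\{|l_1-x_i|,|l_2-x_i|\}$. *)

theory Defs
  imports Complex_Main
begin

text \<open>Profiles: agents are indexed by 1..n, a profile is x :: nat => real
  (only the values x 1, ..., x n matter). Facility locations are a pair (l1, l2).\<close>

definition agent_cost :: "real \<times> real \<Rightarrow> real \<Rightarrow> real" where
  "agent_cost loc y = min \<bar>fst loc - y\<bar> \<bar>snd loc - y\<bar>"

definition SC :: "nat \<Rightarrow> (nat \<Rightarrow> real) \<Rightarrow> real \<times> real \<Rightarrow> real" where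
  "SC n x loc = (\<Sum>i\<in>{1..n}. agent_cost loc (x i))"

definition OPT :: "nat \<Rightarrow> (nat \<Rightarrow> real) \<Rightarrow> real" where
  "OPT n x = (INF loc\<in>(UNIV :: (real \<times> real) set). SC n x loc)"

definition mech :: "nat \<Rightarrow> nat \<Rightarrow> real \<Rightarrow> real \<Rightarrow> (nat \<Rightarrow> real) \<Rightarrow> real \<times> real" where
  "mech n t k a x =
    (let xl = Min (x ` {1..n}); xr = Max (x ` {1..n}); L = xr - xl; xt = x t in
     (xt,
      if xl \<le> xt \<and> xt < xl + a * L
      then xt + max (((1 - a) * k / a) * (xt - xl)) (xr - xt)
      else xt - max (xt - xl) ((a * k / (1 - a)) * (xr - xt))))"

end

theory Submission
  imports Defs
begin

lemma ac_nonneg: "agent_cost loc y \<ge> 0"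
  unfolding agent_cost_def by simp

lemma SC_nonneg: "SC n x loc \<ge> 0"
  unfolding SC_def by (intro sum_nonneg ac_nonneg)

lemma OPT_nonneg: "OPT n x \<ge> 0"
  unfolding OPT_def by (rule cINF_greatest) (auto intro: SC_nonneg)

lemma three_cost:
  assumes "u \<le> v" "v \<le> w"
  shows "min (v - u) (w - v) \<le> agent_cost loc u + agent_cost loc v + agent_cost loc w"
  using assms unfolding agent_cost_def
  by (cases loc) (auto simp: min_def abs_if split: if_splits)

lemma triple:
  assumes "p \<in> {1..n}" "q \<in> {1..n}" "r \<in> {1..n}" "x p \<le> x q" "x q \<le> x r"
  shows "min (x q - x p) (x r - x q) \<le> OPT n x"
proof (cases "p = q \<or> q = r \<or> p = r")
  case True
  then have "min (x q - x p) (x r - x q) \<le> 0" using assms by auto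
  then show ?thesis using OPT_nonneg[of n x] by linarith
next
  case False
  show ?thesis unfolding OPT_def
  proof (rule cINF_greatest)
    fix loc
    have "min (x q - x p) (x r - x q) \<le> agent_cost loc (x p) + agent_cost loc (x q) + agent_cost loc (x r)"
      using three_cost assms by blast
    also have "\<dots> = (\<Sum>i\<in>{p,q,r}. agent_cost loc (x i))" using False by simp
    also have "\<dots> \<le> SC n x loc" unfolding SC_def
      by (rule sum_mono2) (use assms in \<open>auto intro: ac_nonneg\<close>)
    finally show "min (x q - x p) (x r - x q) \<le> SC n x loc" .
  qed simp
qed

lemma case1:
  fixes xl xt xr y a k Op M c l2 :: real
  assumes T: "\<And>u v w. u \<in> S \<Longrightarrow> v \<in> S \<Longrightarrow> w \<in> S \<Longrightarrow> u \<le> v \<Longrightarrow> v \<le> w \<Longrightarrow> min (v-u) (w-v) \<le> Op"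
    and S: "xl \<in> S" "xt \<in> S" "xr \<in> S" "y \<in> S"
    and h: "xl \<le> xt" "xt < xl + a * (xr - xl)" "xl \<le> y" "y \<le> xr" "xt \<le> xr"
    and a: "0 < a" "a < 1" "k \<ge> 2" "Op \<ge> 0"
    and cdef: "c = (1 - a) * k / a"
    and l2: "l2 = xt + max (c * (xt - xl)) (xr - xt)"
    and M1: "M \<ge> 1" and M2: "M \<ge> c / 2" and M3: "M \<ge> a / (1 - a)"
  shows "min \<bar>xt - y\<bar> \<bar>l2 - y\<bar> \<le> M * Op"
proof -
  define d where "d = xt - xl"
  define e where "e = xr - xt"
  have c0: "c > 0" using a cdef by simp
  have de: "d * (1 - a) < a * e" using h(2) unfolding d_def e_def by (simp add: algebra_simps)
  have MO: "Op \<le> M * Op" using M1 a(4) by (simp add: mult_le_cancel_right1)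
  have de2: "d \<le> M * e"
  proof -
    have "d \<le> a / (1 - a) * e" using de a by (simp add: field_simps)
    also have "\<dots> \<le> M * e" using M3 h unfolding e_def by (intro mult_right_mono) auto
    finally show ?thesis .
  qed
  show ?thesis
  proof (cases "y < xt")
    case True
    define g where "g = xt - y"
    have "min g e \<le> Op" using T[OF S(4) S(2) S(3)] True h unfolding g_def e_def by auto
    moreover have "g \<le> d" unfolding g_def d_def using h by auto
    moreover have "M * e \<le> M * Op" if "e \<le> Op" using that M1 by (simp add: mult_left_mono)
    ultimately have "g \<le> M * Op" using MO de2 by (cases "g \<le> e") auto
    then show ?thesis using True unfolding g_def by auto
  next
    case False
    show ?thesis
    proof (cases "e \<ge> c * d")
      case True
      then have "l2 = xr" using l2 unfolding d_def e_def by auto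
      moreover have "min (y - xt) (xr - y) \<le> Op" using T[OF S(2) S(4) S(3)] False h by auto
      ultimately show ?thesis using False h MO by auto
    next
      case F2: False
      then have l: "l2 = xt + c * d" using l2 unfolding d_def e_def by auto
      have "min \<bar>xt - y\<bar> \<bar>l2 - y\<bar> \<le> c * d / 2" using l False F2 h unfolding d_def e_def by (auto simp: min_def abs_if)
      moreover have "min \<bar>xt - y\<bar> \<bar>l2 - y\<bar> \<le> e" using False h unfolding e_def by auto
      moreover have "min d e \<le> Op" using T[OF S(1) S(2) S(3)] h unfolding d_def e_def by auto
      moreover have "c * d / 2 \<le> M * d" using mult_right_mono[OF M2, of d] h unfolding d_def by simp
      moreover have "M * d \<le> M * Op" if "d \<le> Op" using that M1 by (simp add: mult_left_mono)
      ultimately show ?thesis using MO by (cases "d \<le> e") auto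
    qed
  qed
qed

lemma case2:
  fixes xl xt xr y a k Op M c l2 :: real
  assumes T: "\<And>u v w. u \<in> S \<Longrightarrow> v \<in> S \<Longrightarrow> w \<in> S \<Longrightarrow> u \<le> v \<Longrightarrow> v \<le> w \<Longrightarrow> min (v-u) (w-v) \<le> Op"
    and S: "xl \<in> S" "xt \<in> S" "xr \<in> S" "y \<in> S"
    and h: "xl \<le> xt" "xt \<ge> xl + a * (xr - xl)" "xl \<le> y" "y \<le> xr" "xt \<le> xr"
    and a: "0 < a" "a < 1" "k \<ge> 2" "Op \<ge> 0"
    and cdef: "c = a * k / (1 - a)"
    and l2: "l2 = xt - max (xt - xl) (c * (xr - xt))"
    and M1: "M \<ge> 1" and M2: "M \<ge> c / 2" and M3: "M \<ge> (1 - a) / a"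
  shows "min \<bar>xt - y\<bar> \<bar>l2 - y\<bar> \<le> M * Op"
proof -
  define d where "d = xt - xl"
  define e where "e = xr - xt"
  have c0: "c > 0" using a cdef by simp
  have de: "a * e \<le> d * (1 - a)" using h(2) unfolding d_def e_def by (simp add: algebra_simps)
  have MO: "Op \<le> M * Op" using M1 a(4) by (simp add: mult_le_cancel_right1)
  have de2: "e \<le> M * d"
  proof -
    have "e \<le> (1 - a) / a * d" using de a by (simp add: field_simps)
    also have "\<dots> \<le> M * d" using M3 h unfolding d_def by (intro mult_right_mono) auto
    finally show ?thesis .
  qed
  show ?thesis
  proof (cases "y > xt")
    case True
    define g where "g = y - xt"
    have "min d g \<le> Op" using T[OF S(1) S(2) S(4)] True h unfolding g_def d_def by auto
    moreover have "g \<le> e" unfolding g_def e_def using h by auto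
    moreover have "M * d \<le> M * Op" if "d \<le> Op" using that M1 by (simp add: mult_left_mono)
    ultimately have "g \<le> M * Op" using MO de2 by (cases "g \<le> d") auto
    then show ?thesis using True unfolding g_def by auto
  next
    case False
    show ?thesis
    proof (cases "d \<ge> c * e")
      case True
      then have "l2 = xl" using l2 unfolding d_def e_def by auto
      moreover have "min (y - xl) (xt - y) \<le> Op" using T[OF S(1) S(4) S(2)] False h by auto
      ultimately show ?thesis using False h MO by auto
    next
      case F2: False
      then have l: "l2 = xt - c * e" using l2 unfolding d_def e_def by auto
      have "min \<bar>xt - y\<bar> \<bar>l2 - y\<bar> \<le> c * e / 2" using l False F2 h unfolding d_def e_def by (auto simp: min_def abs_if)
      moreover have "min \<bar>xt - y\<bar> \<bar>l2 - y\<bar> \<le> d" using False h unfolding d_def by auto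
      moreover have "min d e \<le> Op" using T[OF S(1) S(2) S(3)] h unfolding d_def e_def by auto
      moreover have "c * e / 2 \<le> M * e" using mult_right_mono[OF M2, of e] h unfolding e_def by simp
      moreover have "M * e \<le> M * Op" if "e \<le> Op" using that M1 by (simp add: mult_left_mono)
      ultimately show ?thesis using MO by (cases "e \<le> d") auto
    qed
  qed
qed

theorem theorem4:
  fixes n t :: nat and k a :: real and x :: "nat \<Rightarrow> real"
  assumes "n \<ge> 2" and "t \<in> {1..n}" and "k \<ge> 2" and "0 < a" and "a < 1"
  shows "SC n x (mech n t k a x)
           \<le> max (((1 - a) * k) / (2 * a)) ((a * k) / (2 * (1 - a))) * (real n - 1) * OPT n x"
proof -
  define M where "M = max (((1 - a) * k) / (2 * a)) ((a * k) / (2 * (1 - a)))"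
  define S where "S = x ` {1..n}"
  define xl where "xl = Min S"
  define xr where "xr = Max S"
  define xt where "xt = x t"
  define Op where "Op = OPT n x"
  have fin: "finite S" "S \<noteq> {}" unfolding S_def using assms(1) by auto
  have xlS: "xl \<in> S" unfolding xl_def using fin by simp
  have xrS: "xr \<in> S" unfolding xr_def using fin by simp
  have xtS: "xt \<in> S" unfolding xt_def S_def using assms(2) by simp
  have bnd: "xl \<le> y \<and> y \<le> xr" if "y \<in> S" for y
    unfolding xl_def xr_def using fin that by simp
  have T: "\<And>u v w. u \<in> S \<Longrightarrow> v \<in> S \<Longrightarrow> w \<in> S \<Longrightarrow> u \<le> v \<Longrightarrow> v \<le> w \<Longrightarrow> min (v-u) (w-v) \<le> Op"
    unfolding S_def Op_def using triple by blast
  have O0: "Op \<ge> 0" unfolding Op_def by (rule OPT_nonneg)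
  have M1: "M \<ge> 1"
  proof (cases "a \<le> 1/2")
    case True
    have "(1 - a) / a \<ge> 1" using True assms by (simp add: field_simps)
    then have "(1 - a) / a * (k / 2) \<ge> 1 * 1" using assms by (intro mult_mono) auto
    then show ?thesis unfolding M_def by (simp add: field_simps)
  next
    case False
    have "a / (1 - a) \<ge> 1" using False assms by (simp add: field_simps)
    then have "a / (1 - a) * (k / 2) \<ge> 1 * 1" using assms by (intro mult_mono) auto
    then show ?thesis unfolding M_def by (simp add: field_simps)
  qed
  have Ma: "M \<ge> a / (1 - a)"
  proof -
    have "a / (1 - a) * (k / 2) \<ge> a / (1 - a) * 1" using assms by (intro mult_left_mono) auto
    then show ?thesis unfolding M_def by (simp add: field_simps)
  qed
  have Mb: "M \<ge> (1 - a) / a"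
  proof -
    have "(1 - a) / a * (k / 2) \<ge> (1 - a) / a * 1" using assms by (intro mult_left_mono) auto
    then show ?thesis unfolding M_def by (simp add: field_simps)
  qed
  have e1: "((1 - a) * k / a) / 2 = ((1 - a) * k) / (2 * a)" "(a * k / (1 - a)) / 2 = (a * k) / (2 * (1 - a))"
    by (simp_all only: divide_divide_eq_left mult.commute)
  have Mc: "M \<ge> ((1 - a) * k / a) / 2" "M \<ge> (a * k / (1 - a)) / 2" unfolding M_def e1 by (rule max.cobounded1, rule max.cobounded2)
  have mech: "mech n t k a x = (xt, if xl \<le> xt \<and> xt < xl + a * (xr - xl)
      then xt + max (((1 - a) * k / a) * (xt - xl)) (xr - xt)
      else xt - max (xt - xl) ((a * k / (1 - a)) * (xr - xt)))"
    unfolding mech_def xl_def xr_def xt_def S_def Let_def by simp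
  have each: "agent_cost (mech n t k a x) y \<le> M * Op" if yS: "y \<in> S" for y
  proof (cases "xt < xl + a * (xr - xl)")
    case True
    have eq: "agent_cost (mech n t k a x) y = min \<bar>xt - y\<bar> \<bar>(xt + max (((1 - a) * k / a) * (xt - xl)) (xr - xt)) - y\<bar>"
      unfolding mech agent_cost_def using bnd[OF xtS] True by simp
    show ?thesis unfolding eq
      by (rule case1[OF T xlS xtS xrS yS _ True _ _ _ assms(4,5,3) O0 refl refl M1 Mc(1) Ma])
         (use bnd[OF xtS] bnd[OF yS] in auto)
  next
    case False
    then have F: "xt \<ge> xl + a * (xr - xl)" by simp
    have eq: "agent_cost (mech n t k a x) y = min \<bar>xt - y\<bar> \<bar>(xt - max (xt - xl) ((a * k / (1 - a)) * (xr - xt))) - y\<bar>"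
      unfolding mech agent_cost_def using False by simp
    show ?thesis unfolding eq
      by (rule case2[OF T xlS xtS xrS yS _ F _ _ _ assms(4,5,3) O0 refl refl M1 Mc(2) Mb])
         (use bnd[OF xtS] bnd[OF yS] in auto)
  qed
  have "SC n x (mech n t k a x) = (\<Sum>i\<in>{1..n}. agent_cost (mech n t k a x) (x i))"
    unfolding SC_def ..
  also have "\<dots> \<le> (\<Sum>i\<in>{1..n}. if i = t then 0 else M * Op)"
  proof (rule sum_mono)
    fix i assume i: "i \<in> {1..n}"
    show "agent_cost (mech n t k a x) (x i) \<le> (if i = t then 0 else M * Op)"
    proof (cases "i = t")
      case True
      then show ?thesis unfolding mech agent_cost_def xt_def by simp
    next
      case False
      then show ?thesis using each[of "x i"] i unfolding S_def by simp
    qed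
  qed
  also have "\<dots> = (real n - 1) * (M * Op)"
  proof -
    have "(\<Sum>i\<in>{1..n}. if i = t then 0 else M * Op) = (\<Sum>i\<in>{1..n} - {t}. M * Op)"
      by (rule sum.mono_neutral_cong_right) auto
    also have "\<dots> = real (n - 1) * (M * Op)" using assms(2) by simp
    finally show ?thesis using assms(1) by (simp add: of_nat_diff)
  qed
  finally show ?thesis unfolding M_def Op_def by (simp add: algebra_simps)
qed

end
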